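(* Take $\mathcal{R}=\mathsf{Comp}$ (computable partial functionals on Baire space). There exists an SCI problem $\mathcal{P}=(\Xi,\Omega,(\mathcal{M},d),\Lambda)$ with countable $\Lambda$ satisfying consistency, together with a fixed representation $\delta_\mathcal{M}$ of $\mathcal{M}$, such that: (1) there are maps $\Gamma_n,\Gamma_{n,m}:\Omega\to\mathcal{M}$ ($n,m\in\mathbb{N}$) with $\Xi(A)=\lim_{n\to\infty}\Gamma_n(A)$ and $\Gamma_n(A)=\lim_{m\to\infty}\Gamma_{n,m}(A)$ for all $A\in\Omega$ (limits in $d$), where every deepest map $\Gamma_{n,m}$ is a computable (i.e. computably realizable from names of $\mathrm{Ev}_\Lambda(A)$ to names of $\Gamma_{n,m}(A)$) general algorithm; (2) every $\Gamma_{n,m}$ is in fact a fixed-query computable general algorithm; (3) no $\Gamma_n$ is a general algorithm; (4) nevertheless there is no computable $K:\subseteq\mathbb{N}^\mathbb{N}\to\mathbb{N}^\mathbb{N}$ with $\lim^{(2)}\circ K\preceq\widehat\Xi$.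
   Context: Consistency: $\Xi(A)\neq\Xi(B)$ implies $f(A)\neq f(B)$ for some $f\in\Lambda$. A general algorithm is $\Gamma:\Omega\to\mathcal{M}$ with a query map $\Lambda_\Gamma$ assigning finite nonempty subsets of $\Lambda$, such that if $f(B)=f(A)$ for all $f\in\Lambda_\Gamma(A)$ then $\Gamma(B)=\Gamma(A)$ and $\Lambda_\Gamma(B)=\Lambda_\Gamma(A)$; it is fixed-query if $\Lambda_\Gamma$ is constant. With $\Lambda=\{f_n\}_n$, $\mathrm{Ev}_\Lambda(A)=(f_n(A))_n$, $I_\Lambda=\mathrm{Ev}_\Lambda(\Omega)\subseteq\mathbb{C}^\mathbb{N}$ carries the subspace representation $\delta_{I_\Lambda}$ of the product of Cauchy representations, and $\widehat\Xi:I_\Lambda\to\mathcal{M}$ is the unique map with $\widehat\Xi\circ\mathrm{Ev}_\Lambda=\Xi$. $\lim$ is the limit operator on Baire space (columnwise limits of eventually constant columns via a computable pairing of $\mathbb{N}^2$), $\lim^{(2)}=\lim\circ\lim$. $\lim^{(2)}\circ K\preceq\widehat\Xi$ means: for every $p\in\mathrm{dom}(\delta_{I_\Lambda})$, $K(p)\in\mathrm{dom}(\lim^{(2)})$ and $\delta_\mathcal{M}(\lim^{(2)}(K(p)))=\widehat\Xi(\delta_{I_\Lambda}(p))$. *)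

theory Defs
  imports Complex_Main "HOL-Library.Nat_Bijection" "HOL-Library.FuncSet"
begin

datatype recf = RZ | RS | RP nat | RC recf "recf list" | RPr recf recf | RMn recf

inductive rec_eval :: "recf \<Rightarrow> nat list \<Rightarrow> nat \<Rightarrow> bool" where
  zero: "rec_eval RZ xs 0"
| succ: "rec_eval RS (x # xs) (Suc x)"
| proj: "i < length xs \<Longrightarrow> rec_eval (RP i) xs (xs ! i)"
| comp: "list_all2 (\<lambda>g y. rec_eval g xs y) gs ys \<Longrightarrow> rec_eval f ys z
          \<Longrightarrow> rec_eval (RC f gs) xs z"
| prim0: "rec_eval f xs z \<Longrightarrow> rec_eval (RPr f g) (0 # xs) z"
| primS: "rec_eval (RPr f g) (n # xs) y \<Longrightarrow> rec_eval g (y # n # xs) z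
          \<Longrightarrow> rec_eval (RPr f g) (Suc n # xs) z"
| mu: "rec_eval f (n # xs) 0 \<Longrightarrow> (\<forall>m<n. \<exists>y. y \<noteq> 0 \<and> rec_eval f (m # xs) y)
          \<Longrightarrow> rec_eval (RMn f) xs n"

definition total_rec2 :: "(nat \<Rightarrow> nat \<Rightarrow> nat) \<Rightarrow> bool" where
  "total_rec2 \<phi> \<longleftrightarrow> (\<exists>r. \<forall>a b. rec_eval r [a, b] (\<phi> a b))"

definition prefix_code :: "(nat \<Rightarrow> nat) \<Rightarrow> nat \<Rightarrow> nat" where
  "prefix_code p k = list_encode (map p [0..<k])"

text \<open>F is computable (a restriction of an element of Comp) on the set D: a total computable
  \<phi>(n, w) returns 0 (not yet known) or Suc of the n-th output symbol, looking only at the finite prefix w.\<close>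
definition comp_on :: "(nat \<Rightarrow> nat) set \<Rightarrow> ((nat \<Rightarrow> nat) \<Rightarrow> (nat \<Rightarrow> nat)) \<Rightarrow> bool" where
  "comp_on D F \<longleftrightarrow> (\<exists>\<phi>. total_rec2 \<phi> \<and>
     (\<forall>p\<in>D. \<forall>n. (\<exists>k. \<phi> n (prefix_code p k) \<noteq> 0) \<and>
        (\<forall>k. \<phi> n (prefix_code p k) \<noteq> 0 \<longrightarrow> \<phi> n (prefix_code p k) = Suc (F p n))))"

definition baire_col :: "(nat \<Rightarrow> nat) \<Rightarrow> nat \<Rightarrow> (nat \<Rightarrow> nat)" where
  "baire_col p n = (\<lambda>k. p (prod_encode (n, k)))"

definition lim_dom :: "(nat \<Rightarrow> nat) set" where
  "lim_dom = {p. \<forall>n. \<exists>a. \<exists>K. \<forall>k\<ge>K. baire_col p n k = a}"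

definition lim_op :: "(nat \<Rightarrow> nat) \<Rightarrow> (nat \<Rightarrow> nat)" where
  "lim_op p = (\<lambda>n. THE a. \<exists>K. \<forall>k\<ge>K. baire_col p n k = a)"

definition lim2_dom :: "(nat \<Rightarrow> nat) set" where
  "lim2_dom = {p. p \<in> lim_dom \<and> lim_op p \<in> lim_dom}"

definition lim2 :: "(nat \<Rightarrow> nat) \<Rightarrow> (nat \<Rightarrow> nat)" where
  "lim2 p = lim_op (lim_op p)"

definition nat_to_rat :: "nat \<Rightarrow> real" where
  "nat_to_rat n = (case prod_decode n of (a, b) \<Rightarrow> real_of_int (int_decode a) / real (Suc b))"

definition nat_to_crat :: "nat \<Rightarrow> complex" where
  "nat_to_crat n = (case prod_decode n of (a, b) \<Rightarrow> Complex (nat_to_rat a) (nat_to_rat b))"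

definition cauchy_name :: "(nat \<Rightarrow> nat) \<Rightarrow> complex \<Rightarrow> bool" where
  "cauchy_name p z \<longleftrightarrow> (\<forall>k. cmod (nat_to_crat (p k) - z) \<le> (1/2) ^ k)"

definition prod_cauchy_name :: "(nat \<Rightarrow> nat) \<Rightarrow> (nat \<Rightarrow> complex) \<Rightarrow> bool" where
  "prod_cauchy_name p z \<longleftrightarrow> (\<forall>n. cauchy_name (baire_col p n) (z n))"

definition Ev :: "(nat \<Rightarrow> 'a \<Rightarrow> complex) \<Rightarrow> 'a \<Rightarrow> (nat \<Rightarrow> complex)" where
  "Ev f A = (\<lambda>n. f n A)"

definition Lambda_set :: "'a set \<Rightarrow> (nat \<Rightarrow> 'a \<Rightarrow> complex) \<Rightarrow> ('a \<Rightarrow> complex) set" where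
  "Lambda_set \<Omega> f = range (\<lambda>n. restrict (f n) \<Omega>)"

text \<open>Domain of the subspace representation \<delta>_{I_\<Lambda>}: names of points of I_\<Lambda> = Ev(\<Omega>).\<close>
definition deltaI_dom :: "'a set \<Rightarrow> (nat \<Rightarrow> 'a \<Rightarrow> complex) \<Rightarrow> (nat \<Rightarrow> nat) set" where
  "deltaI_dom \<Omega> f = {p. \<exists>z\<in>Ev f ` \<Omega>. prod_cauchy_name p z}"

definition metric_on :: "'m set \<Rightarrow> ('m \<Rightarrow> 'm \<Rightarrow> real) \<Rightarrow> bool" where
  "metric_on M d \<longleftrightarrow> (\<forall>x\<in>M. \<forall>y\<in>M. (d x y = 0 \<longleftrightarrow> x = y) \<and> d x y = d y x \<and>
      (\<forall>z\<in>M. d x z \<le> d x y + d y z))"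

definition mconv :: "('m \<Rightarrow> 'm \<Rightarrow> real) \<Rightarrow> (nat \<Rightarrow> 'm) \<Rightarrow> 'm \<Rightarrow> bool" where
  "mconv d x L \<longleftrightarrow> (\<forall>\<epsilon>>0. \<exists>N. \<forall>n\<ge>N. d (x n) L < \<epsilon>)"

definition representation :: "(nat \<Rightarrow> nat) set \<Rightarrow> ((nat \<Rightarrow> nat) \<Rightarrow> 'm) \<Rightarrow> 'm set \<Rightarrow> bool" where
  "representation D \<delta> M \<longleftrightarrow> \<delta> ` D = M"

definition consistent :: "'a set \<Rightarrow> (nat \<Rightarrow> 'a \<Rightarrow> complex) \<Rightarrow> ('a \<Rightarrow> 'm) \<Rightarrow> bool" where
  "consistent \<Omega> f \<Xi> \<longleftrightarrow> (\<forall>A\<in>\<Omega>. \<forall>B\<in>\<Omega>. \<Xi> A \<noteq> \<Xi> B \<longrightarrow> (\<exists>n. f n A \<noteq> f n B))"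

definition is_query_map :: "'a set \<Rightarrow> (nat \<Rightarrow> 'a \<Rightarrow> complex) \<Rightarrow> ('a \<Rightarrow> 'm)
    \<Rightarrow> ('a \<Rightarrow> ('a \<Rightarrow> complex) set) \<Rightarrow> bool" where
  "is_query_map \<Omega> f \<Gamma> Q \<longleftrightarrow>
     (\<forall>A\<in>\<Omega>. finite (Q A) \<and> Q A \<noteq> {} \<and> Q A \<subseteq> Lambda_set \<Omega> f) \<and>
     (\<forall>A\<in>\<Omega>. \<forall>B\<in>\<Omega>. (\<forall>g\<in>Q A. g B = g A) \<longrightarrow> \<Gamma> B = \<Gamma> A \<and> Q B = Q A)"

definition general_algorithm :: "'a set \<Rightarrow> (nat \<Rightarrow> 'a \<Rightarrow> complex) \<Rightarrow> ('a \<Rightarrow> 'm) \<Rightarrow> bool" where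
  "general_algorithm \<Omega> f \<Gamma> \<longleftrightarrow> (\<exists>Q. is_query_map \<Omega> f \<Gamma> Q)"

definition fixed_query_algorithm :: "'a set \<Rightarrow> (nat \<Rightarrow> 'a \<Rightarrow> complex) \<Rightarrow> ('a \<Rightarrow> 'm) \<Rightarrow> bool" where
  "fixed_query_algorithm \<Omega> f \<Gamma> \<longleftrightarrow>
     (\<exists>Q. is_query_map \<Omega> f \<Gamma> Q \<and> (\<forall>A\<in>\<Omega>. \<forall>B\<in>\<Omega>. Q A = Q B))"

definition comp_realizable :: "'a set \<Rightarrow> (nat \<Rightarrow> 'a \<Rightarrow> complex) \<Rightarrow> (nat \<Rightarrow> nat) set
    \<Rightarrow> ((nat \<Rightarrow> nat) \<Rightarrow> 'm) \<Rightarrow> ('a \<Rightarrow> 'm) \<Rightarrow> bool" where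
  "comp_realizable \<Omega> f DM \<delta>M \<Gamma> \<longleftrightarrow> (\<exists>F. comp_on (deltaI_dom \<Omega> f) F \<and>
     (\<forall>p. \<forall>A\<in>\<Omega>. prod_cauchy_name p (Ev f A) \<longrightarrow> F p \<in> DM \<and> \<delta>M (F p) = \<Gamma> A))"

definition lim2_realizes :: "'a set \<Rightarrow> (nat \<Rightarrow> 'a \<Rightarrow> complex) \<Rightarrow> (nat \<Rightarrow> nat) set
    \<Rightarrow> ((nat \<Rightarrow> nat) \<Rightarrow> 'm) \<Rightarrow> ('a \<Rightarrow> 'm) \<Rightarrow> ((nat \<Rightarrow> nat) \<Rightarrow> (nat \<Rightarrow> nat)) \<Rightarrow> bool" where
  "lim2_realizes \<Omega> f DM \<delta>M \<Xi> K \<longleftrightarrow>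
     (\<forall>p\<in>deltaI_dom \<Omega> f. K p \<in> lim2_dom \<and>
        (\<forall>A\<in>\<Omega>. prod_cauchy_name p (Ev f A) \<longrightarrow> lim2 (K p) \<in> DM \<and> \<delta>M (lim2 (K p)) = \<Xi> A))"

end

theory Submission
  imports Defs "HOL-Library.Countable_Set"
begin


inductive_cases RZE: "rec_eval RZ xs y"
inductive_cases RSE: "rec_eval RS xs y"
inductive_cases RPE: "rec_eval (RP i) xs y"
inductive_cases RCE: "rec_eval (RC f gs) xs y"
inductive_cases RPr0E: "rec_eval (RPr f g) (0 # xs) y"
inductive_cases RPrSE: "rec_eval (RPr f g) (Suc n # xs) y"
inductive_cases RMnE: "rec_eval (RMn f) xs y"

lemma rec_eval_det: "rec_eval f xs y \<Longrightarrow> rec_eval f xs z \<Longrightarrow> y = z"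
proof (induct arbitrary: z rule: rec_eval.induct)
  case (zero xs) from zero.prems show ?case by (rule RZE) simp
next
  case (succ x xs) from succ.prems show ?case by (rule RSE) simp
next
  case (proj i xs) from proj.prems show ?case by (rule RPE) simp
next
  case (comp xs gs ys f r)
  from comp.prems obtain ys' where a: "list_all2 (\<lambda>g y. rec_eval g xs y) gs ys'" and b: "rec_eval f ys' z"
    by (auto elim: RCE)
  have "ys = ys'" using comp(1) a
  proof (induction gs arbitrary: ys ys')
    case Nil then show ?case by simp
  next
    case (Cons g gs)
    from Cons.prems(1) obtain y ys0 where y: "ys = y # ys0" "rec_eval g xs y"
      "\<And>w. rec_eval g xs w \<Longrightarrow> y = w"
      "list_all2 (\<lambda>g y. rec_eval g xs y \<and> (\<forall>z. rec_eval g xs z \<longrightarrow> y = z)) gs ys0"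
      unfolding list_all2_Cons1 by blast
    from Cons.prems(2) obtain y' ys0' where y': "ys' = y' # ys0'" "rec_eval g xs y'"
      "list_all2 (\<lambda>g y. rec_eval g xs y) gs ys0'"
      unfolding list_all2_Cons1 by blast
    have "y = y'" using y(3) y'(2) by blast
    moreover have "ys0 = ys0'" using Cons.IH[OF y(4) y'(3)] .
    ultimately show ?case using y(1) y'(1) by simp
  qed
  with b have "rec_eval f ys z" by simp
  then show ?case by (rule comp(3))
next
  case (prim0 f xs r g)
  from prim0.prems have "rec_eval f xs z" by (rule RPr0E)
  then show ?case by (rule prim0(2))
next
  case (primS f g n xs y r)
  from primS.prems obtain y' where p1: "rec_eval (RPr f g) (n # xs) y'" and p2: "rec_eval g (y' # n # xs) z"
    by (auto elim: RPrSE)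
  have "y = y'" by (rule primS(2)[OF p1])
  with p2 have "rec_eval g (y # n # xs) z" by simp
  then show ?case by (rule primS(4))
next
  case (mu f n xs)
  from mu.prems have a: "rec_eval f (z # xs) 0" and b: "\<forall>m<z. \<exists>y. y \<noteq> 0 \<and> rec_eval f (m # xs) y"
    by (auto elim: RMnE)
  show ?case
  proof (rule ccontr)
    assume "n \<noteq> z"
    then consider "n < z" | "z < n" by linarith
    then show False
    proof cases
      case 1 with b obtain y where "y \<noteq> 0" "rec_eval f (n # xs) y" by auto
      then show False using mu(2) by metis
    next
      case 2 with mu(3) obtain y where "y \<noteq> 0" "\<forall>w. rec_eval f (z # xs) w \<longrightarrow> y = w" by blast
      with a show False by metis
    qed
  qed
qed

instance recf :: countable by countable_datatype

lemma countable_total_rec2: "countable {\<phi>. total_rec2 \<phi>}"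
proof -
  have "{\<phi>. total_rec2 \<phi>} \<subseteq> range (\<lambda>r a b. THE v. rec_eval r [a, b] v)"
  proof
    fix \<phi> assume "\<phi> \<in> {\<phi>. total_rec2 \<phi>}"
    then obtain r where r: "\<forall>a b. rec_eval r [a, b] (\<phi> a b)" by (auto simp: total_rec2_def)
    have "\<phi> = (\<lambda>a b. THE v. rec_eval r [a, b] v)"
      proof (intro ext)
      fix a b show "\<phi> a b = (THE v. rec_eval r [a, b] v)"
        by (rule sym, rule the_equality) (use r rec_eval_det in blast)+
    qed
    then show "\<phi> \<in> range (\<lambda>r a b. THE v. rec_eval r [a, b] v)" by blast
  qed
  then show ?thesis by (rule countable_subset) simp
qed



lemma proj': "i < length xs \<Longrightarrow> xs ! i = v \<Longrightarrow> rec_eval (RP i) xs v"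
  using rec_eval.proj by blast

lemma comp1: "rec_eval g xs y \<Longrightarrow> rec_eval f [y] z \<Longrightarrow> rec_eval (RC f [g]) xs z"
  by (rule rec_eval.comp[where ys="[y]"]) auto

lemma comp2: "rec_eval g1 xs y1 \<Longrightarrow> rec_eval g2 xs y2 \<Longrightarrow> rec_eval f [y1, y2] z
  \<Longrightarrow> rec_eval (RC f [g1, g2]) xs z"
  by (rule rec_eval.comp[where ys="[y1, y2]"]) auto

lemma succ': "rec_eval g xs y \<Longrightarrow> rec_eval (RC RS [g]) xs (Suc y)"
  by (rule comp1) (auto intro: rec_eval.succ)

primrec rconst :: "nat \<Rightarrow> recf" where
  "rconst 0 = RZ"
| "rconst (Suc c) = RC RS [rconst c]"

lemma rconst_eval: "rec_eval (rconst c) xs c"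
  by (induction c) (auto intro: rec_eval.zero succ')

definition "radd = RPr (RP 0) (RC RS [RP 0])"

lemma radd_eval: "rec_eval radd [n, y] (n + y)"
proof (induction n)
  case 0 show ?case unfolding radd_def by (rule rec_eval.prim0) (rule proj', auto)
next
  case (Suc n)
  show ?case unfolding radd_def
    by (rule rec_eval.primS[OF Suc[unfolded radd_def]]) (simp add: succ' proj')
qed

definition "rpred = RPr RZ (RP 1)"

lemma rpred_eval: "rec_eval rpred [x] (x - 1)"
proof (induction x)
  case 0 then show ?case unfolding rpred_def by (auto intro: rec_eval.prim0 rec_eval.zero)
next
  case (Suc n)
  have "rec_eval (RPr RZ (RP 1)) (Suc n # []) n"
    by (rule rec_eval.primS[OF Suc[unfolded rpred_def]]) (rule proj', auto)
  then show ?case unfolding rpred_def by simp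
qed

definition "rsubr = RPr (RP 0) (RC rpred [RP 0])"

lemma rsubr_eval: "rec_eval rsubr [y, x] (x - y)"
proof (induction y)
  case 0 show ?case unfolding rsubr_def by (rule rec_eval.prim0) (rule proj', auto)
next
  case (Suc y)
  have "rec_eval (RC rpred [RP 0]) [x - y, y, x] (x - Suc y)"
  proof (rule comp1[OF proj'])
    show "rec_eval rpred [x - y] (x - Suc y)" using rpred_eval[of "x - y"] by (metis diff_Suc_eq_diff_pred diff_right_commute)
  qed auto
  then show ?case unfolding rsubr_def
    by (rule rec_eval.primS[OF Suc[unfolded rsubr_def]])
qed

definition "rsub = RC rsubr [RP 1, RP 0]"

lemma rsub_eval: "rec_eval rsub [x, y] (x - y)"
  unfolding rsub_def by (rule comp2[OF proj' proj' rsubr_eval]) auto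

lemma rsub_eval': "rec_eval g1 xs x \<Longrightarrow> rec_eval g2 xs y \<Longrightarrow> rec_eval (RC rsub [g1, g2]) xs (x - y)"
  by (rule comp2[OF _ _ rsub_eval])

definition "rtri = RPr RZ (RC radd [RC RS [RP 1], RP 0])"

lemma rtri_eval: "rec_eval rtri [n] (triangle n)"
proof (induction n)
  case 0 show ?case unfolding rtri_def by (auto intro: rec_eval.prim0 rec_eval.zero)
next
  case (Suc n)
  have "rec_eval (RC radd [RC RS [RP 1], RP 0]) [triangle n, n] (Suc n + triangle n)"
    by (rule comp2[OF succ'[OF proj'] proj' radd_eval]) auto
  then show ?case unfolding rtri_def
    by (intro rec_eval.primS[OF Suc[unfolded rtri_def]]) (simp add: add.commute)
qed

lemma rtri_eval': "rec_eval g xs n \<Longrightarrow> rec_eval (RC rtri [g]) xs (triangle n)"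
  by (rule comp1[OF _ rtri_eval])

definition "rsearch = RC rsub [RC RS [RP 1], RC rtri [RC RS [RP 0]]]"

lemma rsearch_eval: "rec_eval rsearch [s, w] (Suc w - triangle (Suc s))"
  unfolding rsearch_def
  by (rule rsub_eval'[OF succ'[OF proj'] rtri_eval'[OF succ'[OF proj']]]) auto

lemma triangle_mono: "m \<le> n \<Longrightarrow> triangle m \<le> triangle n"
  by (induction n) (auto simp: le_Suc_eq)

definition "sdec w = fst (prod_decode w) + snd (prod_decode w)"

lemma sdec_props: "triangle (sdec w) + fst (prod_decode w) = w" "fst (prod_decode w) \<le> sdec w"
proof -
  obtain a b where ab: "prod_decode w = (a, b)" by force
  have "prod_encode (prod_decode w) = w" by simp
  then show "triangle (sdec w) + fst (prod_decode w) = w"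
    using ab by (simp add: sdec_def prod_encode_def)
  show "fst (prod_decode w) \<le> sdec w" by (simp add: sdec_def)
qed

definition "rS = RMn rsearch"

lemma rS_eval: "rec_eval rS [w] (sdec w)"
  unfolding rS_def
proof (rule rec_eval.mu)
  have "Suc w - triangle (Suc (sdec w)) = 0" using sdec_props[of w] by simp
  then show "rec_eval rsearch [sdec w, w] 0" using rsearch_eval[of "sdec w" w] by simp
  show "\<forall>m<sdec w. \<exists>y. y \<noteq> 0 \<and> rec_eval rsearch [m, w] y"
  proof (intro allI impI)
    fix m assume "m < sdec w"
    then have "triangle (Suc m) \<le> triangle (sdec w)" by (intro triangle_mono) simp
    then have "Suc w - triangle (Suc m) \<noteq> 0" using sdec_props[of w] by simp
    then show "\<exists>y. y \<noteq> 0 \<and> rec_eval rsearch [m, w] y" using rsearch_eval[of m w] by blast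
  qed
qed

definition "rfst = RC rsub [RP 0, RC rtri [rS]]"

lemma rfst_eval: "rec_eval rfst [w] (fst (prod_decode w))"
proof -
  have "rec_eval rfst [w] (w - triangle (sdec w))"
    unfolding rfst_def by (rule rsub_eval'[OF proj' rtri_eval'[OF rS_eval]]) auto
  moreover have "w - triangle (sdec w) = fst (prod_decode w)" using sdec_props[of w] by simp
  ultimately show ?thesis by simp
qed

definition "rsnd = RC rsub [rS, rfst]"

lemma rsnd_eval: "rec_eval rsnd [w] (snd (prod_decode w))"
proof -
  have "rec_eval rsnd [w] (sdec w - fst (prod_decode w))"
    unfolding rsnd_def by (rule rsub_eval'[OF rS_eval rfst_eval])
  then show ?thesis by (simp add: sdec_def)
qed

definition "hdc t = fst (prod_decode (t - 1))"
definition "tlc t = snd (prod_decode (t - 1))"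

definition "rhd = RC rfst [RC rpred [RP 0]]"
definition "rtl = RC rsnd [RC rpred [RP 0]]"

lemma rhd_eval: "rec_eval rhd [t] (hdc t)"
  unfolding rhd_def hdc_def by (rule comp1[OF comp1[OF proj' rpred_eval] rfst_eval]) auto

lemma rtl_eval: "rec_eval rtl [t] (tlc t)"
  unfolding rtl_def tlc_def by (rule comp1[OF comp1[OF proj' rpred_eval] rsnd_eval]) auto

definition "itc i w = (tlc ^^ i) w"

definition "riter = RPr (RP 0) (RC rtl [RP 0])"

lemma riter_eval: "rec_eval riter [i, w] (itc i w)"
proof (induction i)
  case 0 show ?case unfolding riter_def itc_def by (rule rec_eval.prim0) (rule proj', auto)
next
  case (Suc i)
  have "rec_eval (RC rtl [RP 0]) [itc i w, i, w] (itc (Suc i) w)"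
    unfolding itc_def by (rule comp1[OF proj']) (auto intro: rtl_eval[unfolded itc_def])
  then show ?case unfolding riter_def
    by (rule rec_eval.primS[OF Suc[unfolded riter_def]])
qed

definition "psiv i w = Suc (hdc (itc i w)) - (1 - itc i w)"

definition "rpsi = RC rsub [RC RS [RC rhd [riter]], RC rsub [rconst 1, riter]]"

lemma rpsi_eval: "rec_eval rpsi [i, w] (psiv i w)"
  unfolding rpsi_def psiv_def
  by (rule rsub_eval'[OF succ'[OF comp1[OF riter_eval rhd_eval]] rsub_eval'[OF rconst_eval riter_eval]])

definition "phiv tag i w = (case i of 0 \<Rightarrow> Suc tag | Suc j \<Rightarrow> psiv j w)"

definition "rphi tag = RPr (rconst (Suc tag)) (RC rpsi [RP 1, RP 2])"

lemma rphi_eval: "rec_eval (rphi tag) [i, w] (phiv tag i w)"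
proof (induction i)
  case 0
  have "rec_eval (rconst (Suc tag)) [w] (Suc tag)" by (rule rconst_eval)
  then have "rec_eval (rphi tag) [0, w] (Suc tag)" unfolding rphi_def by (rule rec_eval.prim0)
  then show ?case by (simp add: phiv_def)
next
  case (Suc j)
  have h: "rec_eval (RC rpsi [RP 1, RP 2]) [phiv tag j w, j, w] (psiv j w)"
    by (rule comp2[OF proj' proj' rpsi_eval]) auto
  have "rec_eval (RPr (rconst (Suc tag)) (RC rpsi [RP 1, RP 2])) (Suc j # [w]) (psiv j w)"
    by (rule rec_eval.primS[OF Suc[unfolded rphi_def] h])
  then show ?case by (simp add: rphi_def phiv_def)
qed



lemma prod_decode_0: "prod_decode 0 = (0, 0)"
  by (simp add: prod_decode_def prod_decode_aux.simps)

lemma tlc_Cons: "tlc (Suc (prod_encode (x, n))) = n"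
  by (simp add: tlc_def)
lemma hdc_Cons: "hdc (Suc (prod_encode (x, n))) = x"
  by (simp add: hdc_def)
lemma tlc_0: "tlc 0 = 0" by (simp add: tlc_def prod_decode_0)
lemma hdc_0: "hdc 0 = 0" by (simp add: hdc_def prod_decode_0)

lemma itc_enc: "itc i (list_encode xs) = list_encode (drop i xs)"
proof (induction i arbitrary: xs)
  case 0 then show ?case by (simp add: itc_def)
next
  case (Suc i)
  have "itc (Suc i) (list_encode xs) = tlc (itc i (list_encode xs))" by (simp add: itc_def)
  also have "\<dots> = tlc (list_encode (drop i xs))" by (simp add: Suc)
  also have "\<dots> = list_encode (drop (Suc i) xs)"
  proof (cases "drop i xs")
    case Nil
    then have "drop (Suc i) xs = []" by (simp add: drop_Suc tl_drop[symmetric])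
    with Nil show ?thesis by (simp add: tlc_0)
  next
    case (Cons y ys)
    then have "drop (Suc i) xs = ys" by (simp add: drop_Suc tl_drop[symmetric])
    with Cons show ?thesis by (simp add: tlc_Cons)
  qed
  finally show ?case .
qed

lemma phiv_prefix: "phiv tag (Suc i) (prefix_code p k) = (if i < k then Suc (p i) else 0)"
proof -
  have e: "itc i (prefix_code p k) = list_encode (drop i (map p [0..<k]))"
    by (simp add: prefix_code_def itc_enc)
  show ?thesis
  proof (cases "i < k")
    case True
    then have "drop i (map p [0..<k]) = p i # drop (Suc i) (map p [0..<k])"
      using Cons_nth_drop_Suc[of i "map p [0..<k]"] by simp
    then show ?thesis using True e by (simp add: phiv_def psiv_def hdc_Cons)
  next
    case False
    then have "drop i (map p [0..<k]) = []" by simp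
    then show ?thesis using False e by (simp add: phiv_def psiv_def hdc_0)
  qed
qed

lemma psiv_prefix: "psiv i (prefix_code p k) = (if i < k then Suc (p i) else 0)"
  using phiv_prefix[of 0 i p k] by (simp add: phiv_def)

definition Ftag :: "nat \<Rightarrow> (nat \<Rightarrow> nat) \<Rightarrow> (nat \<Rightarrow> nat)" where
  "Ftag tag p = (\<lambda>j. case j of 0 \<Rightarrow> tag | Suc i \<Rightarrow> p i)"

lemma comp_on_Ftag: "comp_on D (Ftag tag)"
  unfolding comp_on_def
proof (rule exI[of _ "phiv tag"], intro conjI ballI allI)
  show "total_rec2 (phiv tag)" unfolding total_rec2_def using rphi_eval by blast
next
  fix p n
  show "\<exists>k. phiv tag n (prefix_code p k) \<noteq> 0"
  proof (cases n)
    case 0 then show ?thesis by (simp add: phiv_def)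
  next
    case (Suc i)
    have "phiv tag n (prefix_code p (Suc i)) \<noteq> 0" using phiv_prefix[of tag i p "Suc i"] Suc by simp
    then show ?thesis by blast
  qed
next
  fix p n k
  show "phiv tag n (prefix_code p k) \<noteq> 0 \<longrightarrow> phiv tag n (prefix_code p k) = Suc (Ftag tag p n)"
    by (cases n) (auto simp: Ftag_def phiv_def psiv_prefix split: if_splits)
qed



definition A0 :: "nat \<Rightarrow> complex" where "A0 = (\<lambda>_. 0)"
definition ee :: "nat \<Rightarrow> nat \<Rightarrow> complex" where "ee k = (\<lambda>i. if i = k then 1 else 0)"
definition Om :: "(nat \<Rightarrow> complex) set" where "Om = insert A0 (range ee)"
definition ff :: "nat \<Rightarrow> (nat \<Rightarrow> complex) \<Rightarrow> complex" where "ff n A = A n"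
definition c0 :: "nat \<Rightarrow> nat" where "c0 = (\<lambda>_. 0)"
definition c1 :: "nat \<Rightarrow> nat" where "c1 = (\<lambda>_. 1)"
definition dd :: "(nat \<Rightarrow> nat) \<Rightarrow> (nat \<Rightarrow> nat) \<Rightarrow> real" where "dd x y = (if x = y then 0 else 1)"
definition dM :: "(nat \<Rightarrow> nat) \<Rightarrow> (nat \<Rightarrow> nat)" where
  "dM q = (if \<exists>k. prod_cauchy_name (\<lambda>i. q (Suc i)) (ee k) \<and> k \<in> set_decode (q 0) then c1 else c0)"
definition XiS :: "nat set \<Rightarrow> (nat \<Rightarrow> complex) \<Rightarrow> (nat \<Rightarrow> nat)" where
  "XiS S A = (if \<exists>k\<in>S. A = ee k then c1 else c0)"
definition G2 :: "nat set \<Rightarrow> nat \<Rightarrow> (nat \<Rightarrow> complex) \<Rightarrow> (nat \<Rightarrow> nat)" where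
  "G2 S m A = (if \<exists>k\<in>S. k \<le> m \<and> A = ee k then c1 else c0)"

lemma c01: "c0 \<noteq> c1" by (simp add: c0_def c1_def fun_eq_iff)

lemma Ev_ff: "Ev ff A = A" by (simp add: Ev_def ff_def)

lemma ee_inj: "ee j = ee k \<longleftrightarrow> j = k"
  by (auto simp: ee_def fun_eq_iff split: if_splits)

lemma A0_ne: "A0 \<noteq> ee k"
  by (auto simp: A0_def ee_def fun_eq_iff) 

lemma Om_one: "X \<in> Om \<Longrightarrow> X k = 1 \<Longrightarrow> X = ee k"
  by (auto simp: Om_def A0_def ee_def split: if_splits)

lemma Om_01: "X \<in> Om \<Longrightarrow> X n = 0 \<or> X n = 1"
  by (auto simp: Om_def A0_def ee_def)

lemma int_decode_0: "int_decode 0 = 0"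
proof -
  have "int_encode 0 = 0" by (simp add: int_encode_def sum_encode_def)
  then show ?thesis by (metis int_encode_inverse)
qed

definition "code1 = prod_encode (prod_encode (int_encode 1, 0), 0)"

lemma crat_code1: "nat_to_crat code1 = 1"
  by (simp add: code1_def nat_to_crat_def nat_to_rat_def prod_decode_0 complex_eq_iff int_decode_0)

lemma crat_0: "nat_to_crat 0 = 0"
  by (simp add: nat_to_crat_def nat_to_rat_def prod_decode_0 complex_eq_iff int_decode_0)

definition nm :: "(nat \<Rightarrow> complex) \<Rightarrow> nat \<Rightarrow> nat" where
  "nm z = (\<lambda>j. case prod_decode j of (n, k) \<Rightarrow> if z n = 1 then code1 else 0)"

lemma nm_name: "(\<And>n. z n = 0 \<or> z n = 1) \<Longrightarrow> prod_cauchy_name (nm z) z"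
proof -
  assume h: "\<And>n. z n = 0 \<or> z n = 1"
  have "nat_to_crat (baire_col (nm z) n k) = z n" for n k
    using h[of n] by (auto simp: baire_col_def nm_def crat_code1 crat_0)
  then show ?thesis by (simp add: prod_cauchy_name_def cauchy_name_def)
qed

lemma name_unique: "prod_cauchy_name p z \<Longrightarrow> prod_cauchy_name p z' \<Longrightarrow> z = z'"
proof (rule ext, rule ccontr)
  fix n assume p: "prod_cauchy_name p z" "prod_cauchy_name p z'" and ne: "z n \<noteq> z' n"
  define d where "d = cmod (z n - z' n)"
  have d: "d > 0" using ne by (simp add: d_def)
  obtain k where k: "(1/2::real) ^ k < d / 2" using real_arch_pow_inv[of "d/2" "1/2"] d by auto
  let ?c = "nat_to_crat (baire_col p n k)"
  have "cmod (?c - z n) \<le> (1/2) ^ k" "cmod (?c - z' n) \<le> (1/2) ^ k"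
    using p by (auto simp: prod_cauchy_name_def cauchy_name_def)
  moreover have "d \<le> cmod (?c - z n) + cmod (?c - z' n)"
  proof -
    have "z n - z' n = (?c - z' n) - (?c - z n)" by simp
    then have "d = cmod ((?c - z' n) - (?c - z n))" by (simp add: d_def)
    also have "\<dots> \<le> cmod (?c - z' n) + cmod (?c - z n)" by (rule norm_triangle_ineq4)
    finally show ?thesis by simp
  qed
  ultimately show False using k by linarith
qed

lemma Om_name: "A \<in> Om \<Longrightarrow> prod_cauchy_name (nm A) A"
  by (rule nm_name) (rule Om_01)

lemma dM_Ftag: assumes "finite T" "A \<in> Om" "prod_cauchy_name p A"
  shows "dM (Ftag (set_encode T) p) = (if \<exists>k\<in>T. A = ee k then c1 else c0)"
proof -
  have t: "(\<lambda>i. Ftag (set_encode T) p (Suc i)) = p" by (simp add: Ftag_def)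
  have "prod_cauchy_name p (ee k) \<longleftrightarrow> A = ee k" for k
    using name_unique[OF assms(3)] assms(3) by blast
  then show ?thesis unfolding dM_def t using assms(1) by (auto simp: Ftag_def)
qed



lemma exists_S: assumes "countable (C :: nat set set)" shows "\<exists>S. infinite S \<and> S \<notin> C"
proof -
  let ?C = "insert {} C"
  define g where "g = from_nat_into ?C"
  have Cg: "C \<subseteq> range g" unfolding g_def using assms subset_range_from_nat_into[of ?C] by blast
  define S where "S = range (\<lambda>k. 2 * k) \<union> {2 * k + 1 | k. 2 * k + 1 \<notin> g k}"
  have "S \<noteq> g k" for k
  proof
    assume "S = g k"
    have "2 * k + 1 \<in> S \<longleftrightarrow> 2 * k + 1 \<notin> g k"
      unfolding S_def by auto presburger+
    with \<open>S = g k\<close> show False by blast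
  qed
  then have "S \<notin> C" using Cg by blast
  moreover have "infinite S"
  proof -
    have "infinite (range (\<lambda>k::nat. 2 * k))" by (rule range_inj_infinite) (simp add: inj_on_def)
    then show ?thesis unfolding S_def by (rule infinite_super[rotated]) blast
  qed
  ultimately show ?thesis by blast
qed

definition Kphi :: "(nat \<Rightarrow> nat \<Rightarrow> nat) \<Rightarrow> (nat \<Rightarrow> nat) \<Rightarrow> (nat \<Rightarrow> nat)" where
  "Kphi \<phi> p = (\<lambda>n. \<phi> n (prefix_code p (LEAST k. \<phi> n (prefix_code p k) \<noteq> 0)) - 1)"

lemma Kphi_eq:
  assumes "\<forall>n. (\<exists>k. \<phi> n (prefix_code p k) \<noteq> 0) \<and>
        (\<forall>k. \<phi> n (prefix_code p k) \<noteq> 0 \<longrightarrow> \<phi> n (prefix_code p k) = Suc (F p n))"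
  shows "F p = Kphi \<phi> p"
proof
  fix n
  from assms have e: "\<exists>k. \<phi> n (prefix_code p k) \<noteq> 0" by blast
  have "\<phi> n (prefix_code p (LEAST k. \<phi> n (prefix_code p k) \<noteq> 0)) \<noteq> 0" by (rule LeastI_ex[OF e])
  with assms have "\<phi> n (prefix_code p (LEAST k. \<phi> n (prefix_code p k) \<noteq> 0)) = Suc (F p n)" by blast
  then show "F p n = Kphi \<phi> p n" by (simp add: Kphi_def)
qed

definition GG :: "(nat \<Rightarrow> nat \<Rightarrow> nat) \<Rightarrow> nat set" where
  "GG \<phi> = {k. dM (lim2 (Kphi \<phi> (nm (ee k)))) = c1}"

lemma ee_Om: "ee k \<in> Om" by (simp add: Om_def)
lemma A0_Om: "A0 \<in> Om" by (simp add: Om_def)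

lemma nm_dom: "A \<in> Om \<Longrightarrow> nm A \<in> deltaI_dom Om ff"
  unfolding deltaI_dom_def using Om_name by (auto simp: Ev_ff)

lemma XiS_ee: "XiS S (ee k) = (if k \<in> S then c1 else c0)"
  by (auto simp: XiS_def ee_inj)

lemma XiS_A0: "XiS S A0 = c0"
  using A0_ne by (auto simp: XiS_def)

lemma no_K:
  assumes "comp_on (deltaI_dom Om ff) K" "lim2_realizes Om ff UNIV dM (XiS S) K"
  shows "S \<in> GG ` {\<phi>. total_rec2 \<phi>}"
proof -
  from assms(1) obtain \<phi> where phi: "total_rec2 \<phi>" and
    h: "\<forall>p\<in>deltaI_dom Om ff. \<forall>n. (\<exists>k. \<phi> n (prefix_code p k) \<noteq> 0) \<and>
        (\<forall>k. \<phi> n (prefix_code p k) \<noteq> 0 \<longrightarrow> \<phi> n (prefix_code p k) = Suc (K p n))"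
    unfolding comp_on_def by blast
  have "GG \<phi> = S"
  proof (intro set_eqI)
    fix k
    have D: "nm (ee k) \<in> deltaI_dom Om ff" by (rule nm_dom[OF ee_Om])
    have "K (nm (ee k)) = Kphi \<phi> (nm (ee k))" using h D by (intro Kphi_eq) blast
    moreover have "dM (lim2 (K (nm (ee k)))) = XiS S (ee k)"
      using assms(2) D ee_Om Om_name[OF ee_Om, of k] unfolding lim2_realizes_def by (auto simp: Ev_ff)
    ultimately show "k \<in> GG \<phi> \<longleftrightarrow> k \<in> S" using c01 by (auto simp: GG_def XiS_ee)
  qed
  with phi show ?thesis by blast
qed



lemma G2_eventually: "A \<in> Om \<Longrightarrow> \<exists>N. \<forall>m\<ge>N. G2 S m A = XiS S A"
proof -
  assume "A \<in> Om"
  then consider "A = A0" | j where "A = ee j" by (auto simp: Om_def)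
  then show ?thesis
  proof cases
    case 1 then show ?thesis using A0_ne by (auto simp: G2_def XiS_def)
  next
    case 2
    have "\<forall>m\<ge>j. G2 S m A = XiS S A" using 2 by (auto simp: G2_def XiS_def ee_inj)
    then show ?thesis by blast
  qed
qed

lemma mconv_G2: "A \<in> Om \<Longrightarrow> mconv dd (\<lambda>m. G2 S m A) (XiS S A)"
  unfolding mconv_def using G2_eventually[of A S] by (auto simp: dd_def)

lemma restrict_ff_inj: "inj (\<lambda>i. restrict (ff i) Om)"
proof (rule injI)
  fix i j assume "restrict (ff i) Om = restrict (ff j) Om"
  then have "restrict (ff i) Om (ee i) = restrict (ff j) Om (ee i)" by simp
  then have "ee i i = ee i j" using ee_Om[of i] by (simp add: ff_def)
  then show "i = j" unfolding ee_def by (cases "j = i") simp_all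
qed

lemma G2_qm: "is_query_map Om ff (G2 S m) (\<lambda>_. (\<lambda>i. restrict (ff i) Om) ` {..m})"
  unfolding is_query_map_def
proof (rule conjI)
  show "\<forall>A\<in>Om. finite ((\<lambda>i. restrict (ff i) Om) ` {..m}) \<and> (\<lambda>i. restrict (ff i) Om) ` {..m} \<noteq> {} \<and>
      (\<lambda>i. restrict (ff i) Om) ` {..m} \<subseteq> Lambda_set Om ff"
    by (auto simp: Lambda_set_def)
next
  show "\<forall>A\<in>Om. \<forall>B\<in>Om. (\<forall>g\<in>(\<lambda>i. restrict (ff i) Om) ` {..m}. g B = g A) \<longrightarrow>
     G2 S m B = G2 S m A \<and> (\<lambda>i. restrict (ff i) Om) ` {..m} = (\<lambda>i. restrict (ff i) Om) ` {..m}"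
  proof (intro ballI impI)
  fix A B assume AB: "A \<in> Om" "B \<in> Om"
    and h: "\<forall>g\<in>(\<lambda>i. restrict (ff i) Om) ` {..m}. g B = g A"
  have eq: "B i = A i" if "i \<le> m" for i
  proof -
    have "restrict (ff i) Om B = restrict (ff i) Om A" using h that by blast
    then show ?thesis using AB by (simp add: ff_def)
  qed
  have "(\<exists>k\<in>S. k \<le> m \<and> B = ee k) \<longleftrightarrow> (\<exists>k\<in>S. k \<le> m \<and> A = ee k)"
  proof
    assume "\<exists>k\<in>S. k \<le> m \<and> B = ee k"
    then obtain k where k: "k \<in> S" "k \<le> m" "B = ee k" by blast
    then have "A k = 1" using eq[of k] by (simp add: ee_def)
    then have "A = ee k" using Om_one AB(1) by blast
    with k show "\<exists>k\<in>S. k \<le> m \<and> A = ee k" by blast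
  next
    assume "\<exists>k\<in>S. k \<le> m \<and> A = ee k"
    then obtain k where k: "k \<in> S" "k \<le> m" "A = ee k" by blast
    then have "B k = 1" using eq[of k] by (simp add: ee_def)
    then have "B = ee k" using Om_one AB(2) by blast
    with k show "\<exists>k\<in>S. k \<le> m \<and> B = ee k" by blast
  qed
  then show "G2 S m B = G2 S m A \<and> (\<lambda>i. restrict (ff i) Om) ` {..m} = (\<lambda>i. restrict (ff i) Om) ` {..m}"
    unfolding G2_def by simp
  qed
qed

lemma G2_fixed: "fixed_query_algorithm Om ff (G2 S m)"
  unfolding fixed_query_algorithm_def using G2_qm by blast

lemma fixed_general: "fixed_query_algorithm \<Omega> f \<Gamma> \<Longrightarrow> general_algorithm \<Omega> f \<Gamma>"
  unfolding fixed_query_algorithm_def general_algorithm_def by blast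

lemma G2_comp: "comp_realizable Om ff UNIV dM (G2 S m)"
  unfolding comp_realizable_def
proof (intro exI conjI allI ballI impI)
  show "comp_on (deltaI_dom Om ff) (Ftag (set_encode (S \<inter> {..m})))" by (rule comp_on_Ftag)
  fix p A assume A: "A \<in> Om" and p: "prod_cauchy_name p (Ev ff A)"
  show "Ftag (set_encode (S \<inter> {..m})) p \<in> UNIV" by simp
  have "dM (Ftag (set_encode (S \<inter> {..m})) p) = (if \<exists>k\<in>S \<inter> {..m}. A = ee k then c1 else c0)"
    by (rule dM_Ftag) (use A p in \<open>auto simp: Ev_ff\<close>)
  then show "dM (Ftag (set_encode (S \<inter> {..m})) p) = G2 S m A"
    by (auto simp: G2_def)
qed

lemma qm_A0: assumes Q: "is_query_map Om ff \<Gamma> Q" shows "finite (Q A0) \<and> Q A0 \<subseteq> Lambda_set Om ff"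
proof -
  have "\<forall>A\<in>Om. finite (Q A) \<and> Q A \<noteq> {} \<and> Q A \<subseteq> Lambda_set Om ff"
    using Q unfolding is_query_map_def by (rule conjunct1)
  then show ?thesis using A0_Om by blast
qed

lemma XiS_not_general: assumes "infinite S" shows "\<not> general_algorithm Om ff (XiS S)"
proof
  assume "general_algorithm Om ff (XiS S)"
  then obtain Q where Q: "is_query_map Om ff (XiS S) Q" unfolding general_algorithm_def by (elim exE)
  have fin: "finite (Q A0)" and sub: "Q A0 \<subseteq> Lambda_set Om ff"
    using qm_A0[OF Q] by blast+
  define I where "I = (\<lambda>i. restrict (ff i) Om) -` Q A0"
  have "finite I" unfolding I_def using fin restrict_ff_inj by (rule finite_vimageI)
  then have "infinite (S - I)" using assms by (simp add: Diff_infinite_finite)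
  then obtain k where "k \<in> S - I" using infinite_imp_nonempty by blast
  then have k: "k \<in> S" "k \<notin> I" by auto
  have "\<forall>g\<in>Q A0. g (ee k) = g A0"
  proof
    fix g assume g: "g \<in> Q A0"
    from g sub have "g \<in> Lambda_set Om ff" by blast
    then obtain i where i: "g = restrict (ff i) Om" unfolding Lambda_set_def by blast
    with g have "i \<in> I" by (simp add: I_def)
    with k have "i \<noteq> k" by blast
    then show "g (ee k) = g A0" using i ee_Om A0_Om by (simp add: ff_def ee_def A0_def)
  qed
  moreover have "\<forall>A\<in>Om. \<forall>B\<in>Om. (\<forall>g\<in>Q A. g B = g A) \<longrightarrow> XiS S B = XiS S A \<and> Q B = Q A"
    using Q unfolding is_query_map_def by (rule conjunct2)
  ultimately have "XiS S (ee k) = XiS S A0 \<and> Q (ee k) = Q A0"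
    using ee_Om[of k] A0_Om by blast
  then have "XiS S (ee k) = XiS S A0" by (rule conjunct1)
  then show False using k c01 by (simp add: XiS_ee XiS_A0)
qed

lemma rep: "representation UNIV dM {c0, c1}"
  unfolding representation_def
proof
  show "dM ` UNIV \<subseteq> {c0, c1}" by (auto simp: dM_def)
  have a: "dM (\<lambda>_. 0) = c0" by (simp add: dM_def)
  have b: "dM (Ftag (set_encode {0}) (nm (ee 0))) = c1"
    using dM_Ftag[of "{0}" "ee 0" "nm (ee 0)"] ee_Om Om_name by simp
  have "c0 \<in> dM ` UNIV" unfolding a[symmetric] by (rule rangeI)
  moreover have "c1 \<in> dM ` UNIV" unfolding b[symmetric] by (rule rangeI)
  ultimately show "{c0, c1} \<subseteq> dM ` UNIV" by simp
qed



theorem mainTheorem17: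
  shows "\<exists>(\<Omega> :: (nat \<Rightarrow> complex) set) (M :: (nat \<Rightarrow> nat) set) (d :: (nat \<Rightarrow> nat) \<Rightarrow> (nat \<Rightarrow> nat) \<Rightarrow> real)
           (\<Xi> :: (nat \<Rightarrow> complex) \<Rightarrow> (nat \<Rightarrow> nat)) (f :: nat \<Rightarrow> (nat \<Rightarrow> complex) \<Rightarrow> complex)
           (DM :: (nat \<Rightarrow> nat) set) (\<delta>M :: (nat \<Rightarrow> nat) \<Rightarrow> (nat \<Rightarrow> nat))
           (\<Gamma>1 :: nat \<Rightarrow> (nat \<Rightarrow> complex) \<Rightarrow> (nat \<Rightarrow> nat))
           (\<Gamma>2 :: nat \<Rightarrow> nat \<Rightarrow> (nat \<Rightarrow> complex) \<Rightarrow> (nat \<Rightarrow> nat)).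
      metric_on M d \<and> (\<forall>A\<in>\<Omega>. \<Xi> A \<in> M) \<and> consistent \<Omega> f \<Xi> \<and> representation DM \<delta>M M \<and>
      (\<forall>n. \<forall>A\<in>\<Omega>. \<Gamma>1 n A \<in> M) \<and> (\<forall>n m. \<forall>A\<in>\<Omega>. \<Gamma>2 n m A \<in> M) \<and>
      (\<forall>A\<in>\<Omega>. mconv d (\<lambda>n. \<Gamma>1 n A) (\<Xi> A)) \<and>
      (\<forall>n. \<forall>A\<in>\<Omega>. mconv d (\<lambda>m. \<Gamma>2 n m A) (\<Gamma>1 n A)) \<and>
      (\<forall>n m. general_algorithm \<Omega> f (\<Gamma>2 n m) \<and> comp_realizable \<Omega> f DM \<delta>M (\<Gamma>2 n m)) \<and>
      (\<forall>n m. fixed_query_algorithm \<Omega> f (\<Gamma>2 n m) \<and> comp_realizable \<Omega> f DM \<delta>M (\<Gamma>2 n m)) \<and>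
      (\<forall>n. \<not> general_algorithm \<Omega> f (\<Gamma>1 n)) \<and>
      \<not> (\<exists>K. comp_on (deltaI_dom \<Omega> f) K \<and> lim2_realizes \<Omega> f DM \<delta>M \<Xi> K)"
proof -
  have "countable (GG ` {\<phi>. total_rec2 \<phi>})"
    by (rule countable_image) (rule countable_total_rec2)
  then obtain S where S: "infinite S" "S \<notin> GG ` {\<phi>. total_rec2 \<phi>}"
    using exists_S by blast
  have m: "metric_on {c0, c1} dd" unfolding metric_on_def dd_def by auto
  have x: "\<forall>A\<in>Om. XiS S A \<in> {c0, c1}" by (simp add: XiS_def)
  have c: "consistent Om ff (XiS S)"
    unfolding consistent_def ff_def by (metis ext)
  have g1: "\<forall>n. \<forall>A\<in>Om. (\<lambda>n. XiS S) n A \<in> {c0, c1}" by (simp add: XiS_def)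
  have g2: "\<forall>n m. \<forall>A\<in>Om. (\<lambda>n m. G2 S m) n m A \<in> {c0, c1}" by (simp add: G2_def)
  have mc1: "\<forall>A\<in>Om. mconv dd (\<lambda>n. (\<lambda>n. XiS S) n A) (XiS S A)"
    by (simp add: mconv_def dd_def)
  have mc2: "\<forall>n. \<forall>A\<in>Om. mconv dd (\<lambda>m. (\<lambda>n m. G2 S m) n m A) ((\<lambda>n. XiS S) n A)"
    using mconv_G2 by simp
  have ga: "\<forall>n m. general_algorithm Om ff ((\<lambda>n m. G2 S m) n m) \<and> comp_realizable Om ff UNIV dM ((\<lambda>n m. G2 S m) n m)"
    using fixed_general[OF G2_fixed] G2_comp by simp
  have fq: "\<forall>n m. fixed_query_algorithm Om ff ((\<lambda>n m. G2 S m) n m) \<and> comp_realizable Om ff UNIV dM ((\<lambda>n m. G2 S m) n m)"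
    using G2_fixed G2_comp by simp
  have ng: "\<forall>n. \<not> general_algorithm Om ff ((\<lambda>n. XiS S) n)"
    using XiS_not_general[OF S(1)] by simp
  have nk: "\<not> (\<exists>K. comp_on (deltaI_dom Om ff) K \<and> lim2_realizes Om ff UNIV dM (XiS S) K)"
    using no_K S(2) by blast
  show ?thesis
    apply (rule exI[where x=Om], rule exI[where x="{c0, c1}"], rule exI[where x=dd],
        rule exI[where x="XiS S"], rule exI[where x=ff], rule exI[where x=UNIV], rule exI[where x=dM],
        rule exI[where x="\<lambda>n. XiS S"], rule exI[where x="\<lambda>n m. G2 S m"])
    using m x c rep g1 g2 mc1 mc2 ga fq ng nk by (intro conjI)
qed

end
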